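(* Let $\mathscr H$ be a complex Hilbert space and $\mathbf{T}=(T_1,\dots,T_d)\in\mathbb{B}(\mathscr H)^d$. Then for every positive integer $n$, $$w_e(\mathbf{T}^n)\le\sqrt{d}\,w_e^n(\mathbf{T}).$$
   Context: $\mathbb{B}(\mathscr H)$ denotes the bounded linear operators on $\mathscr H$. For $\mathbf{T}=(T_1,\dots,T_d)\in\mathbb{B}(\mathscr H)^d$, $w_e(\mathbf{T})=\sup\{(\sum_{k=1}^d|\langle T_kx,x\rangle|^2)^{1/2}: \|x\|=1\}$ and $\mathbf{T}^n=(T_1^n,\dots,T_d^n)$. *)

theory Defs
  imports "HOL-Analysis.Analysis"
begin

class complex_inner = real_normed_vector +
  fixes scaleC :: "complex \<Rightarrow> 'a \<Rightarrow> 'a" (infixr \<open>*\<^sub>C\<close> 75)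
    and cinner :: "'a \<Rightarrow> 'a \<Rightarrow> complex"
  assumes scaleC_add_right: "a *\<^sub>C (x + y) = a *\<^sub>C x + a *\<^sub>C y"
    and scaleC_add_left: "(a + b) *\<^sub>C x = a *\<^sub>C x + b *\<^sub>C x"
    and scaleC_scaleC: "a *\<^sub>C (b *\<^sub>C x) = (a * b) *\<^sub>C x"
    and scaleC_one: "1 *\<^sub>C x = x"
    and scaleR_scaleC: "scaleR r x = complex_of_real r *\<^sub>C x"
    and cinner_add_left: "cinner (x + y) z = cinner x z + cinner y z"
    and cinner_scaleC_left: "cinner (a *\<^sub>C x) y = a * cinner x y"
    and cinner_commute: "cinner y x = cnj (cinner x y)"
    and cinner_self_norm: "cinner x x = complex_of_real ((norm x)\<^sup>2)"

class chilbert_space = complex_inner + complete_space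

definition cbounded_linear :: "('a::complex_inner \<Rightarrow> 'a) \<Rightarrow> bool" where
  "cbounded_linear T \<longleftrightarrow>
     (\<forall>x y. T (x + y) = T x + T y) \<and>
     (\<forall>c x. T (c *\<^sub>C x) = c *\<^sub>C T x) \<and>
     (\<exists>K. \<forall>x. norm (T x) \<le> K * norm x)"

text \<open>The 0 is inserted so the
  value is 0 on the trivial space (all values are nonnegative, so this does not
  change the supremum otherwise).\<close>
definition joint_numrad :: "nat \<Rightarrow> (nat \<Rightarrow> 'a::complex_inner \<Rightarrow> 'a) \<Rightarrow> real" where
  "joint_numrad d T =
     Sup (insert 0 {sqrt (\<Sum>k<d. (cmod (cinner (T k x) x))\<^sup>2) | x. norm x = 1})"

end

theory Submission
  imports Defs
begin

lemma cinner_add_right: "cinner (x::'a::complex_inner) (y + z) = cinner x y + cinner x z"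
  by (metis cinner_commute cinner_add_left complex_cnj_add)

lemma cinner_scaleC_right: "cinner (x::'a::complex_inner) (a *\<^sub>C y) = cnj a * cinner x y"
  by (metis cinner_commute cinner_scaleC_left complex_cnj_mult)

lemma scaleC_zero_left [simp]: "0 *\<^sub>C (x::'a::complex_inner) = 0"
  by (metis scaleR_scaleC scaleR_zero_left of_real_0)

lemma scaleC_zero_right [simp]: "a *\<^sub>C (0::'a::complex_inner) = 0"
  by (metis add_cancel_right_right add_0 scaleC_add_right)

lemma scaleC_minus1: "(-1) *\<^sub>C (x::'a::complex_inner) = - x"
  by (metis scaleR_scaleC scaleR_minus1_left of_real_1 of_real_minus)

lemma scaleC_real: "complex_of_real r *\<^sub>C (x::'a::complex_inner) = r *\<^sub>R x"
  by (simp add: scaleR_scaleC)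

lemma scaleC_diff_right: "a *\<^sub>C ((x::'a::complex_inner) - y) = a *\<^sub>C x - a *\<^sub>C y"
proof -
  have "a *\<^sub>C (x - y) = a *\<^sub>C (x + (-1) *\<^sub>C y)" by (simp add: scaleC_minus1)
  also have "\<dots> = a *\<^sub>C x + (- a) *\<^sub>C y" by (simp add: scaleC_add_right scaleC_scaleC)
  also have "(- a) *\<^sub>C y = - (a *\<^sub>C y)"
    by (metis scaleC_minus1 scaleC_scaleC mult_minus1)
  finally show ?thesis by simp
qed

lemma cinner_zero_left [simp]: "cinner (0::'a::complex_inner) y = 0"
  by (metis scaleC_zero_left cinner_scaleC_left mult_zero_left)

lemma cinner_diff_left: "cinner ((x::'a::complex_inner) - y) z = cinner x z - cinner y z"
proof -
  have "cinner (x - y) z = cinner (x + (-1) *\<^sub>C y) z" by (simp add: scaleC_minus1)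
  also have "\<dots> = cinner x z - cinner y z" by (simp add: cinner_add_left cinner_scaleC_left)
  finally show ?thesis .
qed

lemma cinner_diff_right: "cinner (z::'a::complex_inner) (x - y) = cinner z x - cinner z y"
  by (metis cinner_commute cinner_diff_left complex_cnj_diff)

lemma cinner_sum_right: "cinner (x::'a::complex_inner) (\<Sum>k\<in>A. f k) = (\<Sum>k\<in>A. cinner x (f k))"
proof (induction A rule: infinite_finite_induct)
  case (infinite A) then show ?case
    by simp (metis cinner_commute cinner_zero_left complex_cnj_zero)
next
  case empty then show ?case by simp (metis cinner_commute cinner_zero_left complex_cnj_zero)
next
  case (insert a A) then show ?case by (simp add: cinner_add_right)
qed

lemma scaleC_sum_left: "(\<Sum>k\<in>A. f k) *\<^sub>C (x::'a::complex_inner) = (\<Sum>k\<in>A. f k *\<^sub>C x)"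
  by (induction A rule: infinite_finite_induct) (simp_all add: scaleC_add_left)

lemma scaleC_sum_right: "a *\<^sub>C (\<Sum>k\<in>A. f k) = (\<Sum>k\<in>A. a *\<^sub>C (f k::'a::complex_inner))"
  by (induction A rule: infinite_finite_induct) (simp_all add: scaleC_add_right)

lemma Re_cinner_self: "Re (cinner (x::'a::complex_inner) x) = (norm x)\<^sup>2"
  by (simp add: cinner_self_norm)

lemma cinner_half_bound: "2 * cmod (cinner (y::'a::complex_inner) x) \<le> (norm y)\<^sup>2 + (norm x)\<^sup>2"
proof -
  define a where "a = cinner y x"
  define c where "c = rcis 1 (Arg a)"
  have ca: "cnj c * a = cmod a"
  proof -
    have "a = rcis (cmod a) (Arg a)" by (simp add: rcis_cmod_Arg)
    then have "cnj c * a = rcis 1 (- Arg a) * rcis (cmod a) (Arg a)"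
      by (simp add: c_def rcis_def cis_cnj)
    also have "\<dots> = cmod a" by (simp add: rcis_mult)
    finally show ?thesis .
  qed
  have cc: "c * cnj c = 1"
    by (metis c_def complex_mod_rcis abs_one complex_norm_square mult.commute of_real_1 power_one)
  have ax: "cinner x y = cnj a" by (simp add: a_def cinner_commute[of x y])
  have "0 \<le> Re (cinner (y - c *\<^sub>C x) (y - c *\<^sub>C x))" by (simp add: Re_cinner_self)
  also have "cinner (y - c *\<^sub>C x) (y - c *\<^sub>C x)
      = cinner y y - cnj c * a - c * cnj a + c * cnj c * cinner x x"
    by (simp add: cinner_diff_left cinner_diff_right cinner_scaleC_right cinner_scaleC_left
          a_def ax algebra_simps)
  also have "\<dots> = cinner y y - 2 * cmod a + cinner x x"
  proof -
    have "c * cnj a = cnj (cnj c * a)" by simp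
    then show ?thesis by (simp add: ca cc)
  qed
  finally show ?thesis by (simp add: Re_cinner_self a_def)
qed


lemma power_ineq_pos:
  fixes S :: "'a::complex_inner \<Rightarrow> 'a"
  assumes add: "\<And>x y. S (x + y) = S x + S y" and sc: "\<And>c x. S (c *\<^sub>C x) = c *\<^sub>C S x"
    and r: "r > 0" and bnd: "\<And>y. cmod (cinner (S y) y) \<le> r * (norm y)\<^sup>2" and n: "n \<ge> 1"
  shows "cmod (cinner ((S^^n) x) x) \<le> r^n * (norm x)\<^sup>2"
proof -
  define a where "a = cinner ((S^^n) x) x"
  define z where "z = rcis (1/r) (- Arg a / real n)"
  define \<omega> where "\<omega> = cis (2*pi/real n)"
  define c where "c k = \<omega>^k * z" for k
  have zn: "z^n * a = complex_of_real (cmod a / r^n)"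
  proof -
    have "z^n = rcis (1/r^n) (- Arg a)" using n by (simp add: z_def DeMoivre2 power_one_over)
    moreover have "a = rcis (cmod a) (Arg a)" by (simp add: rcis_cmod_Arg)
    ultimately have "z^n * a = rcis (1/r^n) (- Arg a) * rcis (cmod a) (Arg a)" by metis
    also have "\<dots> = complex_of_real (cmod a / r^n)" by (simp add: rcis_mult)
    finally show ?thesis .
  qed
  have wn: "\<omega>^n = 1" using n by (simp add: \<omega>_def Complex.DeMoivre)
  have cn: "c k ^ n = z^n" for k
  proof -
    have "(\<omega>^k)^n = 1" by (metis power_mult mult.commute wn power_one)
    then show ?thesis by (simp add: c_def power_mult_distrib)
  qed
  have cmod_c: "cmod (c k) = 1/r" for k using r by (simp add: c_def norm_mult norm_power \<omega>_def z_def)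
  have S0: "S 0 = 0" by (metis add add_cancel_right_right)
  have Ssum: "S (\<Sum>i\<in>A. f i) = (\<Sum>i\<in>A. S (f i))" for A and f :: "nat \<Rightarrow> 'a"
    by (induction A rule: infinite_finite_induct) (simp_all add: S0 add)
  define y where "y k = (\<Sum>i<n. c k ^ i *\<^sub>C (S^^i) x)" for k
  have A: "y k - c k *\<^sub>C S (y k) = x - z^n *\<^sub>C (S^^n) x" for k
  proof -
    define f where "f i = c k ^ i *\<^sub>C (S^^i) x" for i
    have "c k *\<^sub>C S (y k) = (\<Sum>i<n. f (Suc i))"
      by (simp add: y_def Ssum sc scaleC_sum_right scaleC_scaleC f_def mult.commute)
    then have "y k - c k *\<^sub>C S (y k) = (\<Sum>i<n. f i - f (Suc i))"
      by (simp add: y_def f_def sum_subtractf)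
    also have "\<dots> = f 0 - f n" by (rule sum_lessThan_telescope')
    also have "\<dots> = x - z^n *\<^sub>C (S^^n) x" by (simp add: f_def cn scaleC_one)
    finally show ?thesis .
  qed
  have sum_ck: "(\<Sum>k<n. c k ^ i) = (if i = 0 then of_nat n else 0)" if "i < n" for i
  proof (cases "i = 0")
    case True then show ?thesis by simp
  next
    case False
    have ne: "\<omega>^i \<noteq> 1"
    proof
      assume "\<omega>^i = 1"
      then have "cis (2 * pi * real i / real n) = 1" by (simp add: \<omega>_def Complex.DeMoivre mult.commute)
      then have "cos (2 * pi * real i / real n) = 1" by (metis Re_complex_of_real cis.sel(1) of_real_1 one_complex.sel(1))
      then obtain m :: int where m: "2 * pi * real i / real n = real_of_int m * 2 * pi"
        by (auto simp: cos_one_2pi_int)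
      then have "real i = real_of_int m * real n" using n by (simp add: field_simps)
      then have "int i = m * int n" by (metis of_int_eq_iff of_int_mult of_int_of_nat_eq)
      have "m \<le> 0 \<or> m \<ge> 1" by linarith
      then show False
      proof
        assume "m \<le> 0"
        then have "m * int n \<le> 0" by (simp add: mult_nonpos_nonneg)
        then show False using \<open>int i = m * int n\<close> False by simp
      next
        assume "m \<ge> 1"
        then have "m * int n \<ge> int n" using mult_right_mono[of 1 m "int n"] by simp
        then show False using \<open>int i = m * int n\<close> that by linarith
      qed
    qed
    have ck: "c k ^ i = z^i * (\<omega>^i)^k" for k
    proof -
      have "(\<omega>^k)^i = (\<omega>^i)^k" by (metis power_mult mult.commute)
      then show ?thesis by (simp add: c_def power_mult_distrib mult.commute)
    qed
    have "(\<Sum>k<n. c k ^ i) = z^i * (\<Sum>k<n. (\<omega>^i)^k)"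
      by (simp add: ck sum_distrib_left)
    also have "(\<Sum>k<n. (\<omega>^i)^k) = 0"
    proof -
      have "(\<omega>^i)^n = 1" by (metis power_mult mult.commute wn power_one)
      then show ?thesis using ne by (simp add: sum_gp_strict)
    qed
    finally show ?thesis using False by simp
  qed
  have B: "(\<Sum>k<n. y k) = of_nat n *\<^sub>C x"
  proof -
    have "(\<Sum>k<n. y k) = (\<Sum>k<n. \<Sum>i<n. c k ^ i *\<^sub>C (S^^i) x)"
      by (simp only: y_def)
    also have "\<dots> = (\<Sum>i<n. \<Sum>k<n. c k ^ i *\<^sub>C (S^^i) x)"
      by (rule sum.swap)
    also have "\<dots> = (\<Sum>i<n. (\<Sum>k<n. c k ^ i) *\<^sub>C (S^^i) x)"
      by (simp only: scaleC_sum_left)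
    also have "\<dots> = (\<Sum>i<n. (if i = 0 then of_nat n *\<^sub>C x else 0))"
      by (intro sum.cong refl) (simp add: sum_ck)
    also have "\<dots> = of_nat n *\<^sub>C x" using n by (simp add: sum.delta)
    finally show ?thesis .
  qed
  define Ax where "Ax = x - z^n *\<^sub>C (S^^n) x"
  have "of_nat n * cinner Ax x = cinner Ax (of_nat n *\<^sub>C x)" by (simp add: cinner_scaleC_right)
  also have "\<dots> = cinner Ax (\<Sum>k<n. y k)" by (simp add: B)
  also have "\<dots> = (\<Sum>k<n. cinner Ax (y k))" by (rule cinner_sum_right)
  also have "\<dots> = (\<Sum>k<n. cinner (y k - c k *\<^sub>C S (y k)) (y k))" by (simp add: A Ax_def)
  also have "\<dots> = (\<Sum>k<n. cinner (y k) (y k) - c k * cinner (S (y k)) (y k))"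
    by (simp add: cinner_diff_left cinner_scaleC_left)
  finally have eq: "of_nat n * cinner Ax x = (\<Sum>k<n. cinner (y k) (y k) - c k * cinner (S (y k)) (y k))" .
  have "0 \<le> Re (cinner (y k) (y k) - c k * cinner (S (y k)) (y k))" for k
  proof -
    have "Re (c k * cinner (S (y k)) (y k)) \<le> cmod (c k * cinner (S (y k)) (y k))" by (rule complex_Re_le_cmod)
    also have "\<dots> = (1/r) * cmod (cinner (S (y k)) (y k))" by (simp add: norm_mult cmod_c)
    also have "\<dots> \<le> (1/r) * (r * (norm (y k))\<^sup>2)" using bnd r by (intro mult_left_mono) auto
    also have "\<dots> = (norm (y k))\<^sup>2" using r by simp
    finally show ?thesis by (simp add: Re_cinner_self)
  qed
  then have "0 \<le> Re (of_nat n * cinner Ax x)" unfolding eq Re_sum by (intro sum_nonneg) auto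
  then have "0 \<le> Re (cinner Ax x)" using n by (simp add: zero_le_mult_iff)
  moreover have "cinner Ax x = cinner x x - z^n * a"
    by (simp add: Ax_def a_def cinner_diff_left cinner_scaleC_left)
  ultimately have "cmod a / r^n \<le> (norm x)\<^sup>2" by (simp add: zn Re_cinner_self)
  then show ?thesis using r by (simp add: a_def field_simps)
qed


lemma power_ineq:
  fixes S :: "'a::complex_inner \<Rightarrow> 'a"
  assumes add: "\<And>x y. S (x + y) = S x + S y" and sc: "\<And>c x. S (c *\<^sub>C x) = c *\<^sub>C S x"
    and r: "r \<ge> 0" and bnd: "\<And>y. cmod (cinner (S y) y) \<le> r * (norm y)\<^sup>2" and n: "n \<ge> 1"
  shows "cmod (cinner ((S^^n) x) x) \<le> r^n * (norm x)\<^sup>2"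
proof (cases "r > 0")
  case True then show ?thesis using power_ineq_pos[OF add sc True bnd n] by blast
next
  case False
  then have r0: "r = 0" using r by simp
  define q where "q = cmod (cinner ((S^^n) x) x)"
  have "q \<le> 0 + e" if e: "e > 0" for e
  proof -
    define e' where "e' = min 1 (e / ((norm x)\<^sup>2 + 1))"
    have pos: "(norm x)\<^sup>2 + 1 > 0" by (simp add: add_nonneg_pos)
    have e'pos: "e' > 0" using e pos by (simp add: e'_def)
    have e'1: "e' \<le> 1" by (simp add: e'_def)
    have b': "cmod (cinner (S y) y) \<le> e' * (norm y)\<^sup>2" for y
    proof -
      have "cmod (cinner (S y) y) \<le> 0" using bnd[of y] r0 by simp
      also have "0 \<le> e' * (norm y)\<^sup>2" using e'pos by simp
      finally show ?thesis .
    qed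
    have "q \<le> e'^n * (norm x)\<^sup>2" unfolding q_def by (rule power_ineq_pos[OF add sc e'pos b' n])
    also have "\<dots> \<le> e' * (norm x)\<^sup>2"
    proof (rule mult_right_mono)
      show "e'^n \<le> e'" using e'pos e'1 n by (metis power_decreasing power_one_right less_imp_le)
    qed simp
    also have "\<dots> \<le> e / ((norm x)\<^sup>2 + 1) * (norm x)\<^sup>2"
      by (intro mult_right_mono) (simp_all add: e'_def)
    also have "\<dots> \<le> e"
    proof -
      have "(norm x)\<^sup>2 / ((norm x)\<^sup>2 + 1) \<le> 1" using pos by (simp add: divide_le_eq)
      then have "e * ((norm x)\<^sup>2 / ((norm x)\<^sup>2 + 1)) \<le> e * 1" using e by (intro mult_left_mono) auto
      then show ?thesis by simp
    qed
    finally show ?thesis by simp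
  qed
  then have "q \<le> 0" by (rule field_le_epsilon)
  then show ?thesis using r0 n by (simp add: q_def)
qed

theorem theorem2p6:
  fixes T :: "nat \<Rightarrow> 'a::chilbert_space \<Rightarrow> 'a" and d n :: nat
  assumes "d \<ge> 1"
    and "\<forall>k<d. cbounded_linear (T k)"
    and "n \<ge> 1"
  shows "joint_numrad d (\<lambda>k. T k ^^ n) \<le> sqrt (real d) * (joint_numrad d T) ^ n"
proof -
  define W where "W = joint_numrad d T"
  define P where "P x = sqrt (\<Sum>k<d. (cmod (cinner (T k x) x))\<^sup>2)" for x
  define M where "M = {P x | x. norm x = 1}"
  have W_eq: "W = Sup (insert 0 M)" by (simp add: W_def joint_numrad_def M_def P_def)
  have addT: "\<And>x y. T k (x + y) = T k x + T k y" and scT: "\<And>c x. T k (c *\<^sub>C x) = c *\<^sub>C T k x"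
    if "k < d" for k using assms(2) that by (auto simp: cbounded_linear_def)
  have "\<forall>k. \<exists>K. k < d \<longrightarrow> (\<forall>x. norm (T k x) \<le> K * norm x)"
    using assms(2) by (auto simp: cbounded_linear_def)
  then obtain K where K: "\<And>k x. k < d \<Longrightarrow> norm (T k x) \<le> K k * norm x" by metis
  define B where "B = (\<Sum>k<d. (((K k)\<^sup>2 + 1) / 2)\<^sup>2)"
  have bdd: "bdd_above (insert 0 M)"
  proof -
    have "P x \<le> sqrt B" if "norm x = 1" for x
    proof -
      have "(cmod (cinner (T k x) x))\<^sup>2 \<le> (((K k)\<^sup>2 + 1) / 2)\<^sup>2" if k: "k < d" for k
      proof -
        have "2 * cmod (cinner (T k x) x) \<le> (norm (T k x))\<^sup>2 + (norm x)\<^sup>2"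
          by (rule cinner_half_bound)
        moreover have "norm (T k x) \<le> K k" using K[OF k, of x] \<open>norm x = 1\<close> by simp
        then have "(norm (T k x))\<^sup>2 \<le> (K k)\<^sup>2" by (metis norm_ge_zero power_mono)
        ultimately have "cmod (cinner (T k x) x) \<le> ((K k)\<^sup>2 + 1) / 2" using \<open>norm x = 1\<close> by simp
        then show ?thesis by (intro power_mono) auto
      qed
      then have "(\<Sum>k<d. (cmod (cinner (T k x) x))\<^sup>2) \<le> B" unfolding B_def by (intro sum_mono) auto
      then show ?thesis unfolding P_def by (rule real_sqrt_le_mono)
    qed
    then show ?thesis unfolding M_def bdd_above_def
      by (intro exI[of _ "max 0 (sqrt B)"]) (auto simp: le_max_iff_disj)
  qed
  have PW: "P x \<le> W" if "norm x = 1" for x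
    unfolding W_eq using bdd that by (intro cSup_upper) (auto simp: M_def)
  have W0: "0 \<le> W" unfolding W_eq using bdd by (intro cSup_upper) auto
  have single: "cmod (cinner (T k x) x) \<le> W" if "k < d" "norm x = 1" for k x
  proof -
    have "cmod (cinner (T k x) x) = sqrt ((cmod (cinner (T k x) x))\<^sup>2)" by simp
    also have "\<dots> \<le> P x" unfolding P_def
      by (intro real_sqrt_le_mono member_le_sum) (use that in auto)
    finally show ?thesis using PW[OF that(2)] by simp
  qed
  have singleb: "cmod (cinner (T k y) y) \<le> W * (norm y)\<^sup>2" if k: "k < d" for k y
  proof (cases "y = 0")
    case True
    have "T k 0 = 0" by (metis addT[OF k] add_cancel_right_right)
    then show ?thesis using True by simp
  next
    case False
    define t where "t = 1 / norm y"
    define u where "u = complex_of_real t *\<^sub>C y"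
    have nu: "norm u = 1" unfolding u_def scaleC_real using False by (simp add: t_def)
    have "cinner (T k u) u = complex_of_real (t\<^sup>2) * cinner (T k y) y"
      by (simp add: u_def scT[OF k] cinner_scaleC_left cinner_scaleC_right power2_eq_square)
    then have "cmod (cinner (T k u) u) = t\<^sup>2 * cmod (cinner (T k y) y)" by (simp add: norm_mult norm_power)
    then have "t\<^sup>2 * cmod (cinner (T k y) y) \<le> W" using single[OF k nu] by simp
    then show ?thesis using False by (simp add: t_def field_simps)
  qed
  have pw: "cmod (cinner ((T k ^^ n) x) x) \<le> W^n" if "k < d" "norm x = 1" for k x
    using power_ineq[OF addT[OF that(1)] scT[OF that(1)] W0 singleb[OF that(1)] assms(3), of x] that(2)
    by simp
  have "joint_numrad d (\<lambda>k. T k ^^ n) \<le> sqrt (real d) * W ^ n"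
    unfolding joint_numrad_def
  proof (rule cSup_least)
    show "insert 0 {sqrt (\<Sum>k<d. (cmod (cinner ((T k ^^ n) x) x))\<^sup>2) | x. norm x = 1} \<noteq> {}" by simp
  next
    fix v assume "v \<in> insert 0 {sqrt (\<Sum>k<d. (cmod (cinner ((T k ^^ n) x) x))\<^sup>2) | x. norm x = 1}"
    then consider "v = 0" | x where "norm x = 1" "v = sqrt (\<Sum>k<d. (cmod (cinner ((T k ^^ n) x) x))\<^sup>2)"
      by auto
    then show "v \<le> sqrt (real d) * W ^ n"
    proof cases
      case 1 then show ?thesis using W0 by simp
    next
      case 2
      have "(\<Sum>k<d. (cmod (cinner ((T k ^^ n) x) x))\<^sup>2) \<le> (\<Sum>k<d. (W^n)\<^sup>2)"
        using pw 2(1) by (intro sum_mono power_mono) auto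
      also have "\<dots> = real d * (W^n)\<^sup>2" by simp
      finally have "v \<le> sqrt (real d * (W^n)\<^sup>2)" using 2(2) real_sqrt_le_mono by auto
      also have "\<dots> = sqrt (real d) * W^n" using W0 by (simp add: real_sqrt_mult)
      finally show ?thesis .
    qed
  qed
  then show ?thesis by (simp add: W_def)
qed

end
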